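(* Let $k\geq3$, $A=\{0,1,\dots,k-1\}$, $n=k-1$ and let $T\colon A^{n^2}\to A$ be given by $T(x_{1,1},\dots,x_{1,n},\dots,x_{n,1},\dots,x_{n,n})=1$ if $x_{i,j}=i$ for all $i,j$ or $x_{i,j}=j$ for all $i,j$, and $0$ otherwise. Then \[\langle\{T\}\rangle^{(n)}=J_n(A)\cup\{c^n_0\}\cup F,\] where $c^n_0$ is the $n$-ary constant zero function, $J_n(A)$ the set of $n$-ary projections, and $F$ is the set of those $n$-ary functions in $\langle\{T\}\rangle$ which map exactly one $n$-tuple to $1$ and every other $n$-tuple to $0$.
   Context: $\langle\{T\}\rangle$ denotes the clone generated by $T$ (all term operations of positive arity of the algebra $(A;T)$, including projections) and $\langle\{T\}\rangle^{(n)}$ its $n$-ary members. *)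

theory Defs
  imports "HOL-Library.FuncSet"
begin

definition tuples :: "'a set \<Rightarrow> nat \<Rightarrow> 'a list set" where
  "tuples A m = {xs. length xs = m \<and> set xs \<subseteq> A}"

inductive_set term_ops :: "('a list \<Rightarrow> 'a) \<Rightarrow> nat \<Rightarrow> nat \<Rightarrow> ('a list \<Rightarrow> 'a) set"
  for T :: "'a list \<Rightarrow> 'a" and p :: nat and m :: nat where
  proj: "i < m \<Longrightarrow> (\<lambda>xs. xs ! i) \<in> term_ops T p m"
| comp: "length gs = p \<Longrightarrow> (\<forall>g\<in>set gs. g \<in> term_ops T p m) \<Longrightarrow>
         (\<lambda>xs. T (map (\<lambda>g. g xs) gs)) \<in> term_ops T p m"

text \<open>The m-ary members of the clone generated by T on A, as functions A^m \<rightarrow> A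
  (restricted to A^m, so that equality is extensional on A^m).\<close>
definition clone_n :: "'a set \<Rightarrow> ('a list \<Rightarrow> 'a) \<Rightarrow> nat \<Rightarrow> nat \<Rightarrow> ('a list \<Rightarrow> 'a) set" where
  "clone_n A T p m = (\<lambda>f. restrict f (tuples A m)) ` term_ops T p m"

definition projections :: "'a set \<Rightarrow> nat \<Rightarrow> ('a list \<Rightarrow> 'a) set" where
  "projections A m = {restrict (\<lambda>xs. xs ! i) (tuples A m) | i. i < m}"

definition const_op :: "'a set \<Rightarrow> nat \<Rightarrow> 'a \<Rightarrow> ('a list \<Rightarrow> 'a)" where
  "const_op A m c = restrict (\<lambda>_. c) (tuples A m)"

end

theory Submission
  imports Defs
begin

definition good :: "nat list set \<Rightarrow> nat \<Rightarrow> (nat list \<Rightarrow> nat) \<Rightarrow> bool" where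
  "good X n h \<longleftrightarrow> (\<exists>c<n. \<forall>x\<in>X. h x = x ! c) \<or>
     ((\<forall>x\<in>X. h x = 0 \<or> h x = 1) \<and> (\<forall>x\<in>X. \<forall>y\<in>X. h x = 1 \<longrightarrow> h y = 1 \<longrightarrow> x = y))"

lemma good_proj:
  assumes "good X n g" "a \<in> X" "b \<in> X" "a \<noteq> b"
    and "g a \<notin> {0,1} \<or> g b \<notin> {0,1} \<or> (g a = 1 \<and> g b = 1)"
  shows "\<exists>c<n. \<forall>x\<in>X. g x = x ! c"
  using assms unfolding good_def by blast

lemma idx_lt: "i < n \<Longrightarrow> j < (n::nat) \<Longrightarrow> i * n + j < n * n"
proof -
  assume "i < n" "j < n"
  then have "(i+1) * n \<le> n * n" by (intro mult_le_mono1) simp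
  then show ?thesis using \<open>j < n\<close> by simp
qed

lemma line_case:
  fixes F :: "nat \<Rightarrow> nat list \<Rightarrow> nat"
  assumes n2: "n \<ge> 2" and X: "X = tuples A n"
    and g: "\<And>i. i < n \<Longrightarrow> good X n (F i)"
    and a: "a \<in> X" and b: "b \<in> X"
    and Fa: "\<And>i. i < n \<Longrightarrow> F i a = i + 1"
    and Fb: "\<And>i. i < n \<Longrightarrow> F i b = i + 1"
  shows "a = b"
proof (rule ccontr)
  assume ne: "a \<noteq> b"
  have "\<forall>i<n. \<exists>c<n. \<forall>x\<in>X. F i x = x ! c"
  proof (intro allI impI)
    fix i assume "i < n"
    show "\<exists>c<n. \<forall>x\<in>X. F i x = x ! c"
      by (rule good_proj[OF g[OF \<open>i<n\<close>] a b ne]) (use Fa[OF \<open>i<n\<close>] Fb[OF \<open>i<n\<close>] in auto)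
  qed
  then obtain p where p: "\<And>i. i < n \<Longrightarrow> p i < n \<and> (\<forall>x\<in>X. F i x = x ! p i)"
    by metis
  have inj: "inj_on p {..<n}"
  proof (rule inj_onI)
    fix i j assume "i \<in> {..<n}" "j \<in> {..<n}" "p i = p j"
    then have "F i a = F j a" using p a by auto
    then show "i = j" using Fa \<open>i \<in> {..<n}\<close> \<open>j \<in> {..<n}\<close> by auto
  qed
  have sub: "p ` {..<n} \<subseteq> {..<n}" using p by auto
  have surj: "p ` {..<n} = {..<n}"
    using endo_inj_surj[OF _ sub inj] by simp
  have "a ! c = b ! c" if "c < n" for c
  proof -
    from surj that have "c \<in> p ` {..<n}" by simp
    then obtain i where i: "i < n" "c = p i" by auto
    then show ?thesis using p[OF i(1)] Fa[OF i(1)] Fb[OF i(1)] a b by auto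
  qed
  moreover have "length a = n" "length b = n" using a b X by (auto simp: tuples_def)
  ultimately have "a = b" by (intro nth_equalityI) auto
  with ne show False by simp
qed

lemma mixed_case:
  fixes G :: "nat \<Rightarrow> nat \<Rightarrow> nat list \<Rightarrow> nat"
  assumes n2: "n \<ge> 2"
    and g: "\<And>i j. i < n \<Longrightarrow> j < n \<Longrightarrow> good X n (G i j)"
    and a: "a \<in> X" and b: "b \<in> X"
    and Ga: "\<And>i j. i < n \<Longrightarrow> j < n \<Longrightarrow> G i j a = i + 1"
    and Gb: "\<And>i j. i < n \<Longrightarrow> j < n \<Longrightarrow> G i j b = j + 1"
  shows "a = b"
proof (rule ccontr)
  assume ne: "a \<noteq> b"
  have "\<forall>ij\<in>{..<n}\<times>{..<n}. \<exists>c<n. \<forall>x\<in>X. G (fst ij) (snd ij) x = x ! c"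
  proof
    fix ij assume "ij \<in> {..<n}\<times>{..<n}"
    then obtain i j where ij: "ij = (i,j)" "i < n" "j < n" by auto
    show "\<exists>c<n. \<forall>x\<in>X. G (fst ij) (snd ij) x = x ! c"
      using good_proj[OF g[OF ij(2,3)] a b ne] Ga[OF ij(2,3)] Gb[OF ij(2,3)] ij(1)
      by fastforce
  qed
  then obtain p where p: "\<And>ij. ij \<in> {..<n}\<times>{..<n} \<Longrightarrow> p ij < n \<and>
      (\<forall>x\<in>X. G (fst ij) (snd ij) x = x ! p ij)"
    by metis
  have inj: "inj_on p ({..<n}\<times>{..<n})"
  proof (rule inj_onI)
    fix u v assume u: "u \<in> {..<n}\<times>{..<n}" and v: "v \<in> {..<n}\<times>{..<n}" and e: "p u = p v"
    have "G (fst u) (snd u) a = G (fst v) (snd v) a" "G (fst u) (snd u) b = G (fst v) (snd v) b"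
      using p[OF u] p[OF v] a b e by auto
    then show "u = v" using Ga Gb u v by (auto simp: prod_eq_iff)
  qed
  have "card ({..<n}\<times>{..<n}) \<le> card {..<n::nat}"
    by (rule card_inj_on_le[OF inj]) (use p in auto)
  then have "n * n \<le> n" by (simp add: card_cartesian_product)
  moreover have "2 * n \<le> n * n" by (rule mult_le_mono1[OF n2])
  ultimately show False using n2 by simp
qed

lemma all_good:
  assumes n2: "n \<ge> 2" and X: "X = tuples A n"
    and T: "T = (\<lambda>xs::nat list. if (\<forall>i<n. \<forall>j<n. xs ! (i * n + j) = i + 1) \<or>
                (\<forall>i<n. \<forall>j<n. xs ! (i * n + j) = j + 1) then 1 else 0)"
  shows "h \<in> term_ops T (n^2) n \<Longrightarrow> good X n h"
proof (induction h rule: term_ops.induct)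
  case (proj i)
  then show ?case unfolding good_def by blast
next
  case (comp gs)
  define R where "R = (\<lambda>a. \<forall>i<n. \<forall>j<n. (gs ! (i*n+j)) a = i+1)"
  define C where "C = (\<lambda>a. \<forall>i<n. \<forall>j<n. (gs ! (i*n+j)) a = j+1)"
  have nth: "map (\<lambda>g. g xs) gs ! (i*n+j) = (gs!(i*n+j)) xs" if "i<n" "j<n" for i j xs
    using idx_lt[OF that] comp.hyps(1) by (simp add: power2_eq_square)
  have gg: "good X n (gs!(i*n+j))" if "i<n" "j<n" for i j
  proof -
    have "i*n+j < length gs" using idx_lt[OF that] comp.hyps(1) by (simp add: power2_eq_square)
    then have "gs!(i*n+j) \<in> set gs" by (rule nth_mem)
    then show ?thesis using comp.IH by blast
  qed
  have one: "R a \<or> C a" if "T (map (\<lambda>g. g a) gs) = 1" for a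
    using that nth unfolding T R_def C_def by (auto split: if_splits)
  have uniq: "a = b" if a: "a \<in> X" and b: "b \<in> X" and ha: "T (map (\<lambda>g. g a) gs) = 1"
     and hb: "T (map (\<lambda>g. g b) gs) = 1" for a b
  proof -
    have n0: "0 < n" using n2 by simp
    consider "R a" "R b" | "C a" "C b" | "R a" "C b" | "C a" "R b" using one[OF ha] one[OF hb] by blast
    then show ?thesis
    proof cases
      case 1
      show ?thesis
      proof (rule line_case[OF n2 X, of "\<lambda>i. gs!(i*n)"])
        fix i assume i: "i < n"
        show "good X n (gs!(i*n))" using gg[OF i n0] by simp
        show "(gs!(i*n)) a = i + 1" using 1(1) i n0 unfolding R_def by (metis add_0_right)
        show "(gs!(i*n)) b = i + 1" using 1(2) i n0 unfolding R_def by (metis add_0_right)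
      qed (use a b in auto)
    next
      case 2
      show ?thesis
      proof (rule line_case[OF n2 X, of "\<lambda>i. gs!i"])
        fix i assume i: "i < n"
        show "good X n (gs!i)" using gg[OF n0 i] by simp
        show "(gs!i) a = i + 1" using 2(1) i n0 unfolding C_def by (metis add_0 mult_0)
        show "(gs!i) b = i + 1" using 2(2) i n0 unfolding C_def by (metis add_0 mult_0)
      qed (use a b in auto)
    next
      case 3
      show ?thesis
        by (rule mixed_case[OF n2, where G="\<lambda>i j. gs!(i*n+j)"]) (use gg a b 3 in \<open>auto simp: R_def C_def\<close>)
    next
      case 4
      have "b = a"
        by (rule mixed_case[OF n2, where G="\<lambda>i j. gs!(i*n+j)"]) (use gg a b 4 in \<open>auto simp: R_def C_def\<close>)
      then show ?thesis by simp
    qed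
  qed
  show ?case unfolding good_def
  proof (rule disjI2, intro conjI ballI impI)
    fix x show "T (map (\<lambda>g. g x) gs) = 0 \<or> T (map (\<lambda>g. g x) gs) = 1" unfolding T by simp
  next
    fix x y assume "x \<in> X" "y \<in> X" "T (map (\<lambda>g. g x) gs) = 1" "T (map (\<lambda>g. g y) gs) = 1"
    then show "x = y" using uniq by blast
  qed
qed

theorem lemma3p7:
  fixes k :: nat
  assumes "k \<ge> 3"
  defines "A \<equiv> {0..<k}"
      and "n \<equiv> k - 1"
  defines "T \<equiv> (\<lambda>xs::nat list.
             if (\<forall>i<n. \<forall>j<n. xs ! (i * n + j) = i + 1) \<or>
                (\<forall>i<n. \<forall>j<n. xs ! (i * n + j) = j + 1) then 1 else 0)"
  shows "clone_n A T (n^2) n =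
           projections A n \<union> {const_op A n 0} \<union>
           {f \<in> clone_n A T (n^2) n. \<exists>x\<in>tuples A n. f x = 1 \<and>
                 (\<forall>y\<in>tuples A n. y \<noteq> x \<longrightarrow> f y = 0)}"
proof -
  have n2: "n \<ge> 2" using assms unfolding n_def by simp
  have n0: "0 < n" using n2 by simp
  have good: "good (tuples A n) n h" if "h \<in> term_ops T (n^2) n" for h
    by (rule all_good[OF n2 refl T_def[THEN meta_eq_to_obj_eq] that])
  show ?thesis
  proof (rule equalityI)
    show "clone_n A T (n^2) n \<subseteq> projections A n \<union> {const_op A n 0} \<union>
           {f \<in> clone_n A T (n^2) n. \<exists>x\<in>tuples A n. f x = 1 \<and>
                 (\<forall>y\<in>tuples A n. y \<noteq> x \<longrightarrow> f y = 0)}"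
    proof
      fix f assume fc: "f \<in> clone_n A T (n^2) n"
      then obtain h where h: "h \<in> term_ops T (n^2) n" and f: "f = restrict h (tuples A n)"
        unfolding clone_n_def by auto
      from good[OF h] consider (p) c where "c<n" "\<forall>x\<in>tuples A n. h x = x!c"
        | (z) "\<forall>x\<in>tuples A n. h x = 0 \<or> h x = 1"
              "\<forall>x\<in>tuples A n. \<forall>y\<in>tuples A n. h x = 1 \<longrightarrow> h y = 1 \<longrightarrow> x = y"
        unfolding good_def by blast
      then show "f \<in> projections A n \<union> {const_op A n 0} \<union>
           {f \<in> clone_n A T (n^2) n. \<exists>x\<in>tuples A n. f x = 1 \<and>
                 (\<forall>y\<in>tuples A n. y \<noteq> x \<longrightarrow> f y = 0)}"
      proof cases
        case p
        then have "f = restrict (\<lambda>xs. xs!c) (tuples A n)" unfolding f by (auto simp: fun_eq_iff)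
        then show ?thesis using p unfolding projections_def by blast
      next
        case z
        show ?thesis
        proof (cases "\<exists>a\<in>tuples A n. h a = 1")
          case True
          then obtain a where a: "a\<in>tuples A n" "h a = 1" by blast
          have "\<forall>y\<in>tuples A n. y \<noteq> a \<longrightarrow> f y = 0" using z a f by auto
          then show ?thesis using a f fc by auto
        next
          case False
          then have "f = const_op A n 0" unfolding f const_op_def using z by (auto simp: fun_eq_iff)
          then show ?thesis by blast
        qed
      qed
    qed
  next
    have "projections A n \<subseteq> clone_n A T (n^2) n"
      unfolding projections_def clone_n_def using term_ops.proj by blast
    moreover have "const_op A n 0 \<in> clone_n A T (n^2) n"
    proof -
      let ?g = "\<lambda>xs::nat list. T (map (\<lambda>g. g xs) (replicate (n^2) (\<lambda>xs::nat list. xs!0)))"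
      have "?g \<in> term_ops T (n^2) n" by (rule term_ops.comp) (use term_ops.proj n0 in auto)
      moreover have "?g xs = 0" for xs
      proof -
        have nn: "n < n^2" using n2 by (simp add: power2_eq_square)
        have 1: "\<not> (\<forall>i<n. \<forall>j<n. replicate (n^2) (xs!0) ! (i*n+j) = i+1)"
        proof
          assume H: "\<forall>i<n. \<forall>j<n. replicate (n^2) (xs!0) ! (i*n+j) = i+1"
          have "replicate (n^2) (xs!0) ! (0*n+0) = 0+1" using H n0 by blast
          moreover have "replicate (n^2) (xs!0) ! (1*n+0) = 1+1"
          proof -
            have "1 < n \<longrightarrow> (\<forall>j<n. replicate (n^2) (xs!0) ! (1*n+j) = 1+1)"
              using H by (rule spec)
            then have "\<forall>j<n. replicate (n^2) (xs!0) ! (1*n+j) = 1+1" using n2 by simp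
            then show ?thesis using n0 by blast
          qed
          ultimately show False using nn n0 by simp
        qed
        have 2: "\<not> (\<forall>i<n. \<forall>j<n. replicate (n^2) (xs!0) ! (i*n+j) = j+1)"
        proof
          assume H: "\<forall>i<n. \<forall>j<n. replicate (n^2) (xs!0) ! (i*n+j) = j+1"
          have "replicate (n^2) (xs!0) ! (0*n+0) = 0+1" using H n0 by blast
          moreover have "replicate (n^2) (xs!0) ! (0*n+1) = 1+1"
          proof -
            have "\<forall>j<n. replicate (n^2) (xs!0) ! (0*n+j) = j+1" using H n0 by blast
            then have "1 < n \<longrightarrow> replicate (n^2) (xs!0) ! (0*n+1) = 1+1" by (rule spec)
            then show ?thesis using n2 by simp
          qed
          ultimately show False using nn n0 n2 by simp
        qed
        have "map (\<lambda>g. g xs) (replicate (n^2) (\<lambda>xs::nat list. xs!0)) = replicate (n^2) (xs!0)"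
          by simp
        then show ?thesis unfolding T_def using 1 2 by simp
      qed
      ultimately show ?thesis unfolding clone_n_def const_op_def image_iff
        by (intro bexI[of _ ?g]) (auto simp: fun_eq_iff)
    qed
    ultimately show "projections A n \<union> {const_op A n 0} \<union>
           {f \<in> clone_n A T (n^2) n. \<exists>x\<in>tuples A n. f x = 1 \<and>
                 (\<forall>y\<in>tuples A n. y \<noteq> x \<longrightarrow> f y = 0)} \<subseteq> clone_n A T (n^2) n"
      by blast
  qed
qed

end
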